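(* Let $A\in\mathbb{R}^{m\times n}$, let $d\ge n$, and let $\{u_\ell\}_{\ell\in[L]}$ be a projective $2$-design for $\mathbb{R}^d$. Let $\Pi:\mathbb{R}^d\to\mathbb{R}^n$ be the projection onto the first $n$ coordinates, and let $z$ be a random vector uniformly distributed over the list $\{\sqrt d\,\Pi u_\ell:\ell\in[L]\}$ (i.e. $z=\sqrt d\,\Pi u_\ell$ with $\ell$ uniform on $[L]$). Let $x\in\mathbb{R}^n$ be a unit vector and define the random vector $y:=Azz^\top x\in\mathbb{R}^m$. Then for each $i\in[m]$, $$\mathbb{E}[e_i^\top y]=e_i^\top Ax,\qquad \operatorname{Var}(e_i^\top y)\le 2\|A\|_{2\to\infty}^2.$$
   Context: $[L]=\{1,\dots,L\}$; $e_i$ is the $i$th standard basis vector. $\|A\|_{2\to\infty}$ is the operator norm from $\ell_2$ to $\ell_\infty$, equal to the largest Euclidean norm of a row of $A$. Let $\sigma$ be the uniform probability measure on $S^{d-1}$ and $\mathrm{Hom}_j(\mathbb{R}^d)$ the homogeneous polynomials of degree $j$ in $d$ real variables. A projective $t$-design for $\mathbb{R}^d$ is a finite family $\{u_\ell\}_{\ell\in[L]}\subset S^{d-1}$ with $\frac1L\sum_\ell p(u_\ell)=\int_{S^{d-1}}p\,d\sigma$ for all $p\in\mathrm{Hom}_{2k}(\mathbb{R}^d)$, $k\in\{0,\dots,t\}$. *)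

theory Defs
  imports "HOL-Probability.Probability"
begin

text \<open>Conventions: a vector of R^d is a function nat \<Rightarrow> real whose relevant
coordinates are those with index < d (coordinates 0..d-1).\<close>

definition sqnorm :: "nat \<Rightarrow> (nat \<Rightarrow> real) \<Rightarrow> real" where
  "sqnorm d x = (\<Sum>i<d. (x i)^2)"

definition on_sphere :: "nat \<Rightarrow> (nat \<Rightarrow> real) \<Rightarrow> bool" where
  "on_sphere d x \<longleftrightarrow> sqnorm d x = 1"

text \<open>Uniform probability measure sigma on S^{d-1}: the push-forward of the
uniform (normalized Lebesgue) measure on the open unit ball under x \<mapsto> x/|x|.\<close>

definition unit_ball :: "nat \<Rightarrow> (nat \<Rightarrow> real) set" where
  "unit_ball d = {x \<in> space (PiM {..<d} (\<lambda>_. lborel)). sqnorm d x < 1}"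

definition sphere_measure :: "nat \<Rightarrow> (nat \<Rightarrow> real) measure" where
  "sphere_measure d =
     distr (uniform_measure (PiM {..<d} (\<lambda>_. lborel)) (unit_ball d))
           (PiM {..<d} (\<lambda>_. borel))
           (\<lambda>x. restrict (\<lambda>i. x i / sqrt (sqnorm d x)) {..<d})"

definition monomial_fun :: "nat \<Rightarrow> (nat \<Rightarrow> nat) \<Rightarrow> (nat \<Rightarrow> real) \<Rightarrow> real" where
  "monomial_fun d \<alpha> x = (\<Prod>i<d. (x i) ^ (\<alpha> i))"

definition Hom :: "nat \<Rightarrow> nat \<Rightarrow> ((nat \<Rightarrow> real) \<Rightarrow> real) set" where
  "Hom d j = {p. \<exists>S c. finite S \<and>
       (\<forall>\<alpha>\<in>S. (\<forall>i\<ge>d. \<alpha> i = 0) \<and> (\<Sum>i<d. \<alpha> i) = j) \<and>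
       (\<forall>x. p x = (\<Sum>\<alpha>\<in>S. c \<alpha> * monomial_fun d \<alpha> x))}"

definition projective_design ::
  "nat \<Rightarrow> nat \<Rightarrow> nat \<Rightarrow> (nat \<Rightarrow> nat \<Rightarrow> real) \<Rightarrow> bool" where
  "projective_design t d L u \<longleftrightarrow>
     (\<forall>l<L. on_sphere d (u l)) \<and>
     (\<forall>k\<le>t. \<forall>p\<in>Hom d (2*k).
        (1 / real L) * (\<Sum>l<L. p (u l)) = integral\<^sup>L (sphere_measure d) p)"

text \<open>The (2 \<rightarrow> \<infinity>) operator norm of an m\<times>n matrix, which equals the
largest Euclidean norm of a row.\<close>

definition norm_2_inf :: "nat \<Rightarrow> nat \<Rightarrow> (nat \<Rightarrow> nat \<Rightarrow> real) \<Rightarrow> real" where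
  "norm_2_inf m n A = Max {sqrt (\<Sum>j<n. (A i j)^2) | i. i < m}"

end

theory Submission
  imports Defs
begin


interpretation pl: product_sigma_finite "\<lambda>_::nat. lborel::real measure"
  by (simp add: product_sigma_finite_def lborel.sigma_finite_measure_axioms)

lemma upd_pres:
  fixes d j :: nat and c :: real and g :: "(nat \<Rightarrow> real) \<Rightarrow> real"
  defines "P \<equiv> PiM {..<d} (\<lambda>_. lborel::real measure)"
  assumes j: "j < d" and c: "\<bar>c\<bar> = 1"
    and g[measurable]: "g \<in> borel_measurable P"
    and gj: "\<And>x y. g (x(j:=y)) = g x"
  shows "distr P P (\<lambda>x. x(j := c * x j + g x)) = P"
proof -
  let ?T = "\<lambda>x. x(j := c * x j + g x)"
  have Tm[measurable]: "?T \<in> P \<rightarrow>\<^sub>M P" unfolding P_def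
    by (rule measurable_fun_upd[where J="{..<d}"]) (use j g in \<open>auto simp: P_def\<close>)
  have I: "{..<d} = insert j ({..<d} - {j})" using j by auto
  have c0: "c \<noteq> 0" using c by auto
  have eqP: "P = PiM (insert j ({..<d} - {j})) (\<lambda>_. lborel)" unfolding P_def using I by simp
  show ?thesis
  proof (rule measure_eqI)
    fix A assume A: "A \<in> sets (distr P P ?T)"
    hence A'[measurable]: "A \<in> sets P" by simp
    have meas1: "(\<lambda>x. indicator A (?T x) :: ennreal) \<in> borel_measurable P" by measurable
    have meas2: "(\<lambda>x. indicator A x :: ennreal) \<in> borel_measurable P" by measurable
    have "emeasure (distr P P ?T) A = emeasure P (?T -` A \<inter> space P)"
      using A' Tm by (simp add: emeasure_distr)
    also have "\<dots> = (\<integral>\<^sup>+x. indicator (?T -` A \<inter> space P) x \<partial>P)"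
      using A' Tm by (simp add: measurable_sets)
    also have "\<dots> = (\<integral>\<^sup>+x. indicator A (?T x) \<partial>P)"
      by (rule nn_integral_cong) (auto split: split_indicator)
    also have "\<dots> = (\<integral>\<^sup>+x. (\<integral>\<^sup>+y. indicator A (?T (x(j:=y))) \<partial>lborel) \<partial>PiM ({..<d} - {j}) (\<lambda>_. lborel))"
      unfolding eqP by (rule pl.product_nn_integral_insert, simp, simp, rule meas1[unfolded eqP])
    also have "\<dots> = (\<integral>\<^sup>+x. (\<integral>\<^sup>+y. indicator A (x(j:=y)) \<partial>lborel) \<partial>PiM ({..<d} - {j}) (\<lambda>_. lborel))"
    proof (rule nn_integral_cong)
      fix x assume x: "x \<in> space (PiM ({..<d} - {j}) (\<lambda>_. lborel::real measure))"
      have m: "(\<lambda>y. indicator A (x(j:=y)) :: ennreal) \<in> borel_measurable borel"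
      proof -
        have "(\<lambda>y. x(j:=y)) \<in> lborel \<rightarrow>\<^sub>M P" unfolding P_def
          by (subst I, rule measurable_component_update) (use x in auto)
        then show ?thesis by measurable
      qed
      have "(\<integral>\<^sup>+y. indicator A (x(j:=y)) \<partial>lborel) = \<bar>c\<bar> * (\<integral>\<^sup>+y. indicator A (x(j:=g x + c * y)) \<partial>lborel)"
        by (rule nn_integral_real_affine[OF m c0])
      also have "\<dots> = (\<integral>\<^sup>+y. indicator A (?T (x(j:=y))) \<partial>lborel)"
        using c gj by (simp add: add.commute)
      finally show "(\<integral>\<^sup>+y. indicator A (?T (x(j:=y))) \<partial>lborel) = (\<integral>\<^sup>+y. indicator A (x(j:=y)) \<partial>lborel)" by simp
    qed
    also have "\<dots> = (\<integral>\<^sup>+x. indicator A x \<partial>P)"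
      unfolding eqP by (rule pl.product_nn_integral_insert[symmetric], simp, simp, rule meas2[unfolded eqP])
    also have "\<dots> = emeasure P A" using A' by simp
    finally show "emeasure (distr P P ?T) A = emeasure P A" .
  qed simp
qed

definition PP :: "nat \<Rightarrow> (nat \<Rightarrow> real) measure" where
  "PP d = PiM {..<d} (\<lambda>_. lborel)"

lemma pres_comp:
  assumes [measurable]: "T1 \<in> PP d \<rightarrow>\<^sub>M PP d" "T2 \<in> PP d \<rightarrow>\<^sub>M PP d"
    and "distr (PP d) (PP d) T1 = PP d" "distr (PP d) (PP d) T2 = PP d"
  shows "distr (PP d) (PP d) (T1 \<circ> T2) = PP d"
  using distr_distr[of T1 "PP d" "PP d" T2 "PP d"] assms by simp

definition flip :: "nat \<Rightarrow> (nat \<Rightarrow> real) \<Rightarrow> (nat \<Rightarrow> real)" where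
  "flip j x = x(j := - x j)"

definition shear :: "nat \<Rightarrow> nat \<Rightarrow> real \<Rightarrow> (nat \<Rightarrow> real) \<Rightarrow> (nat \<Rightarrow> real)" where
  "shear j k t x = x(j := x j + t * x k)"

lemma flip_meas[measurable]: "j < d \<Longrightarrow> flip j \<in> PP d \<rightarrow>\<^sub>M PP d"
  unfolding flip_def PP_def
  by (rule measurable_fun_upd[where J="{..<d}"]) auto

lemma shear_meas[measurable]: "j < d \<Longrightarrow> k < d \<Longrightarrow> shear j k t \<in> PP d \<rightarrow>\<^sub>M PP d"
  unfolding shear_def PP_def
  by (rule measurable_fun_upd[where J="{..<d}"]) auto

lemma flip_pres: "j < d \<Longrightarrow> distr (PP d) (PP d) (flip j) = PP d"
  using upd_pres[of j d "-1" "\<lambda>_. 0"] unfolding flip_def PP_def by simp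

lemma shear_pres: "j < d \<Longrightarrow> k < d \<Longrightarrow> j \<noteq> k \<Longrightarrow> distr (PP d) (PP d) (shear j k t) = PP d"
  using upd_pres[of j d 1 "\<lambda>x. t * x k"] unfolding shear_def PP_def by simp

definition rot :: "nat \<Rightarrow> nat \<Rightarrow> (nat \<Rightarrow> real) \<Rightarrow> (nat \<Rightarrow> real)" where
  "rot j k x = x(j := (x j + x k) / sqrt 2, k := (x j - x k) / sqrt 2)"

lemma rot_decomp:
  assumes "j \<noteq> k"
  shows "rot j k = shear j k (1 - sqrt 2) \<circ> shear k j (1 / sqrt 2) \<circ> shear j k (1 - sqrt 2) \<circ> flip k"
proof
  fix x
  have s2: "sqrt 2 * sqrt 2 = (2::real)" by simp
  show "rot j k x = (shear j k (1 - sqrt 2) \<circ> shear k j (1 / sqrt 2) \<circ> shear j k (1 - sqrt 2) \<circ> flip k) x"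
    unfolding rot_def shear_def flip_def using assms
    by (auto simp: fun_eq_iff field_simps s2)
qed

lemma rot_meas: "j < d \<Longrightarrow> k < d \<Longrightarrow> j \<noteq> k \<Longrightarrow> rot j k \<in> PP d \<rightarrow>\<^sub>M PP d"
  by (simp add: rot_decomp)

lemma rot_pres: "j < d \<Longrightarrow> k < d \<Longrightarrow> j \<noteq> k \<Longrightarrow> distr (PP d) (PP d) (rot j k) = PP d"
  apply (simp add: rot_decomp)
  by (intro pres_comp shear_pres flip_pres measurable_comp[OF _ shear_meas] measurable_comp[OF _ flip_meas] shear_meas flip_meas) auto


definition Nz :: "nat \<Rightarrow> (nat \<Rightarrow> real) \<Rightarrow> (nat \<Rightarrow> real)" where
  "Nz d x = restrict (\<lambda>i. x i / sqrt (sqnorm d x)) {..<d}"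

definition mu :: "nat \<Rightarrow> (nat \<Rightarrow> real) measure" where
  "mu d = uniform_measure (PP d) (unit_ball d)"

lemma ball_sets[measurable]: "unit_ball d \<in> sets (PP d)"
  unfolding unit_ball_def PP_def sqnorm_def by measurable

lemma Nz_meas[measurable]: "Nz d \<in> PP d \<rightarrow>\<^sub>M PP d"
  unfolding Nz_def PP_def sqnorm_def by measurable

lemma Nz_meas2: "Nz d \<in> PP d \<rightarrow>\<^sub>M PiM {..<d} (\<lambda>_. borel)"
  unfolding Nz_def PP_def sqnorm_def by measurable

lemma mu_inv:
  assumes T[measurable]: "T \<in> PP d \<rightarrow>\<^sub>M PP d" and D: "distr (PP d) (PP d) T = PP d"
    and sq: "\<And>x. x \<in> space (PP d) \<Longrightarrow> sqnorm d (T x) = sqnorm d x"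
    and f[measurable]: "(f :: _ \<Rightarrow> real) \<in> borel_measurable (PP d)"
  shows "integral\<^sup>L (mu d) f = integral\<^sup>L (mu d) (\<lambda>x. f (T x))"
proof -
  have Tm: "T \<in> mu d \<rightarrow>\<^sub>M mu d" unfolding mu_def
    using T by (simp cong: measurable_cong_sets)
  have pre: "T -` (unit_ball d \<inter> A) \<inter> space (PP d) = unit_ball d \<inter> (T -` A \<inter> space (PP d))" for A
    using measurable_space[OF T] sq unfolding unit_ball_def PP_def by auto
  have "distr (mu d) (mu d) T = mu d"
  proof (rule measure_eqI)
    fix A assume "A \<in> sets (distr (mu d) (mu d) T)"
    hence A[measurable]: "A \<in> sets (PP d)" by (simp add: mu_def)
    have "emeasure (distr (mu d) (mu d) T) A = emeasure (mu d) (T -` A \<inter> space (PP d))"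
      using Tm A by (simp add: emeasure_distr mu_def)
    also have "\<dots> = emeasure (PP d) (unit_ball d \<inter> (T -` A \<inter> space (PP d))) / emeasure (PP d) (unit_ball d)"
      unfolding mu_def by (rule emeasure_uniform_measure) (auto simp: measurable_sets[OF T])
    also have "emeasure (PP d) (unit_ball d \<inter> (T -` A \<inter> space (PP d))) = emeasure (distr (PP d) (PP d) T) (unit_ball d \<inter> A)"
      by (subst emeasure_distr) (auto simp: pre[symmetric] vimage_Int Int_assoc)
    also have "\<dots> = emeasure (PP d) (unit_ball d \<inter> A)" using D by simp
    finally show "emeasure (distr (mu d) (mu d) T) A = emeasure (mu d) A"
      unfolding mu_def by simp
  qed simp
  then have "integral\<^sup>L (mu d) f = integral\<^sup>L (distr (mu d) (mu d) T) f" by simp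
  also have "\<dots> = integral\<^sup>L (mu d) (\<lambda>x. f (T x))"
    by (rule integral_distr[OF Tm]) (simp add: mu_def)
  finally show ?thesis .
qed

lemma ball_fin: "emeasure (PP d) (unit_ball d) \<noteq> \<infinity>"
proof -
  have "unit_ball d \<subseteq> PiE {..<d} (\<lambda>_. {-1..1::real})"
  proof
    fix x assume x: "x \<in> unit_ball d"
    have "\<bar>x i\<bar> \<le> 1" if i: "i < d" for i
    proof -
      have "(x i)^2 \<le> sqnorm d x" unfolding sqnorm_def
        by (rule member_le_sum[where f="\<lambda>i. (x i)^2"]) (use i in auto)
      then have "(x i)^2 \<le> 1" using x unfolding unit_ball_def by auto
      then show ?thesis by (simp add: abs_square_le_1)
    qed
    then show "x \<in> PiE {..<d} (\<lambda>_. {-1..1::real})"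
      using x unfolding unit_ball_def PP_def by (auto simp: space_PiM PiE_iff abs_le_iff)
  qed
  then have "emeasure (PP d) (unit_ball d) \<le> emeasure (PP d) (PiE {..<d} (\<lambda>_. {-1..1::real}))"
    by (intro emeasure_mono) (auto simp: PP_def)
  also have "\<dots> = (\<Prod>i<d. emeasure lborel {-1..1::real})"
    unfolding PP_def by (rule pl.emeasure_PiM) auto
  also have "\<dots> = 2 ^ d" by simp
  finally show ?thesis by (auto simp: top_unique power_eq_top_ennreal)
qed

lemma ball_pos: "emeasure (PP d) (unit_ball d) \<noteq> 0"
proof -
  define c :: real where "c = 1 / (real d + 1)"
  have c0: "c > 0" by (simp add: c_def)
  have "PiE {..<d} (\<lambda>_. {-c<..<c}) \<subseteq> unit_ball d"
  proof
    fix x assume x: "x \<in> PiE {..<d} (\<lambda>_. {-c<..<c})"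
    have "sqnorm d x \<le> (\<Sum>i<d. c^2)" unfolding sqnorm_def
    proof (rule sum_mono)
      fix i assume "i \<in> {..<d}"
      then have "\<bar>x i\<bar> \<le> c" using x by (force simp: PiE_iff abs_le_iff less_imp_le)
      then show "(x i)^2 \<le> c^2" by (metis abs_ge_zero power2_abs power_mono)
    qed
    also have "\<dots> = real d / (real d + 1)^2" by (simp add: c_def power_divide)
    also have "\<dots> < 1"
    proof -
      have "real d < (real d + 1)^2" by (simp add: power2_eq_square algebra_simps add_pos_nonneg)
      moreover have "0 < (real d + 1)^2" by simp
      ultimately show ?thesis by (simp only: divide_less_eq_1_pos)
    qed
    finally show "x \<in> unit_ball d"
      using x unfolding unit_ball_def by (auto simp: space_PiM PiE_iff)
  qed
  then have "emeasure (PP d) (PiE {..<d} (\<lambda>_. {-c<..<c})) \<le> emeasure (PP d) (unit_ball d)"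
    by (intro emeasure_mono) auto
  moreover have "emeasure (PP d) (PiE {..<d} (\<lambda>_. {-c<..<c})) = (\<Prod>i<d. emeasure lborel {-c<..<c})"
    unfolding PP_def by (rule pl.emeasure_PiM) auto
  moreover have "(\<Prod>i<d. emeasure lborel {-c<..<c}) \<noteq> 0" using c0 by (simp add: prod_zero_iff)
  ultimately show ?thesis by (metis le_zero_eq)
qed

lemma mu_prob: "prob_space (mu d)"
  unfolding mu_def by (rule prob_space_uniform_measure[OF ball_pos ball_fin])


lemma mono_prod: "set xs \<subseteq> {..<d} \<Longrightarrow> monomial_fun d (count_list xs) v = prod_list (map v xs)"
proof (induction xs)
  case Nil then show ?case by (simp add: monomial_fun_def)
next
  case (Cons a xs)
  have "monomial_fun d (count_list (a # xs)) v = (\<Prod>i<d. (if i = a then v i else 1) * v i ^ count_list xs i)"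
    unfolding monomial_fun_def by (rule prod.cong) auto
  also have "\<dots> = v a * monomial_fun d (count_list xs) v"
    using Cons.prems by (simp add: prod.distrib monomial_fun_def prod.delta)
  also have "\<dots> = v a * prod_list (map v xs)" using Cons by simp
  finally show ?case by (simp only: list.map prod_list.Cons)
qed

lemma sum_count: "set xs \<subseteq> {..<d::nat} \<Longrightarrow> (\<Sum>i<d. count_list xs i) = length xs"
proof (induction xs)
  case (Cons a xs)
  have "(\<Sum>i<d. count_list (a # xs) i) = (\<Sum>i<d. (if i = a then 1 else 0) + count_list xs i)"
    by (rule sum.cong) auto
  also have "\<dots> = 1 + (\<Sum>i<d. count_list xs i)"
  proof -
    have "(\<Sum>i<d. (if i = a then 1 else 0::nat)) = 1" using Cons.prems by (subst sum.delta) auto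
    then show ?thesis by (simp add: sum.distrib)
  qed
  finally show ?case using Cons by simp
qed simp

lemma Hom_prod: "set xs \<subseteq> {..<d} \<Longrightarrow> (\<lambda>v. prod_list (map v xs)) \<in> Hom d (length xs)"
proof -
  assume xs: "set xs \<subseteq> {..<d}"
  have z: "\<forall>i\<ge>d. count_list xs i = 0" using xs by (auto simp: count_list_0_iff)
  show ?thesis unfolding Hom_def
    by (intro CollectI exI[of _ "{count_list xs}"] exI[of _ "\<lambda>_. 1"]) (simp add: z mono_prod[OF xs] sum_count[OF xs])
qed

lemma prodl_meas: "set xs \<subseteq> {..<d} \<Longrightarrow> (\<lambda>v::nat\<Rightarrow>real. prod_list (map v xs)) \<in> borel_measurable (PiM {..<d} (\<lambda>_. borel))"
proof (induction xs)
  case (Cons a xs)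
  then have "a < d" "set xs \<subseteq> {..<d}" by auto
  moreover have "(\<lambda>v. v a) \<in> borel_measurable (PiM {..<d} (\<lambda>_. borel))"
    by (rule measurable_component_singleton) (use \<open>a < d\<close> in simp)
  ultimately show ?case using Cons.IH
    unfolding list.map prod_list.Cons by (intro borel_measurable_times) auto
qed simp

lemma prodl_meas': "set xs \<subseteq> {..<d} \<Longrightarrow> (\<lambda>v::nat\<Rightarrow>real. prod_list (map v xs)) \<in> borel_measurable (PP d)"
proof -
  have "sets (PP d) = sets (PiM {..<d} (\<lambda>_. borel))" unfolding PP_def
    by (rule sets_PiM_cong) auto
  then show "set xs \<subseteq> {..<d} \<Longrightarrow> ?thesis" using prodl_meas
    by (simp cong: measurable_cong_sets)
qed

lemma Nz_bound: "i < d \<Longrightarrow> \<bar>Nz d x i\<bar> \<le> 1"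
proof -
  assume True: "i < d"
  have "(x i)^2 \<le> sqnorm d x" unfolding sqnorm_def
    by (rule member_le_sum[where f="\<lambda>i. (x i)^2"]) (use True in auto)
  then have "\<bar>x i\<bar> \<le> sqrt (sqnorm d x)" using real_le_rsqrt by fastforce
  then show ?thesis using True unfolding Nz_def
    by (cases "sqrt (sqnorm d x) = 0") (auto simp: abs_div divide_le_eq_1)
qed

lemma prodl_bound: "set xs \<subseteq> {..<d} \<Longrightarrow> \<bar>prod_list (map (Nz d x) xs)\<bar> \<le> 1"
  by (induction xs) (auto simp: abs_mult intro!: mult_le_one Nz_bound)

definition J :: "nat \<Rightarrow> nat list \<Rightarrow> real" where
  "J d xs = integral\<^sup>L (mu d) (\<lambda>x. prod_list (map (Nz d x) xs))"

lemma m_meas: "set xs \<subseteq> {..<d} \<Longrightarrow> (\<lambda>x. prod_list (map (Nz d x) xs)) \<in> borel_measurable (PP d)"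
  using measurable_comp[OF Nz_meas prodl_meas'[of xs d]] by (simp add: comp_def)

lemma J_int: "set xs \<subseteq> {..<d} \<Longrightarrow> integrable (mu d) (\<lambda>x. prod_list (map (Nz d x) xs))"
proof -
  assume a: "set xs \<subseteq> {..<d}"
  interpret prob_space "mu d" by (rule mu_prob)
  show ?thesis
    by (rule integrable_const_bound[where B=1]) (use m_meas[OF a] prodl_bound[OF a] in \<open>auto simp: mu_def\<close>)
qed

lemma design_J:
  assumes D: "projective_design 2 d L u" and xs: "set xs \<subseteq> {..<d}" and k: "k \<le> 2" "length xs = 2 * k"
  shows "(1 / real L) * (\<Sum>l<L. prod_list (map (u l) xs)) = J d xs"
proof -
  have "(1 / real L) * (\<Sum>l<L. prod_list (map (u l) xs)) = integral\<^sup>L (sphere_measure d) (\<lambda>v. prod_list (map v xs))"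
    using D k Hom_prod[OF xs] unfolding projective_design_def by auto
  also have "\<dots> = J d xs"
    unfolding sphere_measure_def J_def
  proof (subst integral_distr)
    show "(\<lambda>x. restrict (\<lambda>i. x i / sqrt (sqnorm d x)) {..<d}) \<in> uniform_measure (Pi\<^sub>M {..<d} (\<lambda>_. lborel)) (unit_ball d) \<rightarrow>\<^sub>M Pi\<^sub>M {..<d} (\<lambda>_. borel)"
      using Nz_meas2[of d] unfolding Nz_def[abs_def] PP_def by simp
    show "(\<lambda>v::nat\<Rightarrow>real. prod_list (map v xs)) \<in> borel_measurable (Pi\<^sub>M {..<d} (\<lambda>_. borel))"
      using prodl_meas[OF xs] by simp
  qed (simp add: mu_def PP_def Nz_def)
  finally show ?thesis .
qed


lemma sq_flip: "j < d \<Longrightarrow> sqnorm d (flip j x) = sqnorm d x"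
  unfolding sqnorm_def flip_def by (rule sum.cong) auto

lemma Nz_flip: "j < d \<Longrightarrow> Nz d (flip j x) = flip j (Nz d x)"
  using sq_flip[of j d x] unfolding Nz_def by (auto simp: fun_eq_iff flip_def)

lemma prodl_flip: "prod_list (map (flip j v) xs) = (-1) ^ (count_list xs j) * prod_list (map v xs)"
  by (induction xs) (auto simp: flip_def)

lemma J_flip:
  assumes j: "j < d" and xs: "set xs \<subseteq> {..<d}" and odd: "odd (count_list xs j)"
  shows "J d xs = 0"
proof -
  have "J d xs = integral\<^sup>L (mu d) (\<lambda>x. prod_list (map (Nz d (flip j x)) xs))"
    unfolding J_def by (rule mu_inv[OF flip_meas[OF j] flip_pres[OF j] sq_flip[OF j] m_meas[OF xs]])
  also have "\<dots> = integral\<^sup>L (mu d) (\<lambda>x. - prod_list (map (Nz d x) xs))"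
    using odd by (simp add: Nz_flip[OF j] prodl_flip)
  also have "\<dots> = - J d xs" by (simp add: J_def)
  finally show ?thesis by simp
qed

lemma sq_rot: assumes "j < d" "k < d" "j \<noteq> k" shows "sqnorm d (rot j k x) = sqnorm d x"
proof -
  have "sqnorm d y = (\<Sum>i\<in>{..<d}-{j,k}. (y i)^2) + (y j)^2 + (y k)^2" for y
    unfolding sqnorm_def using assms
    by (subst sum.remove[of _ j], simp, simp, subst sum.remove[of _ k]) (auto simp: algebra_simps Diff_insert2[symmetric] insert_commute)
  moreover have "(\<Sum>i\<in>{..<d}-{j,k}. (rot j k x i)^2) = (\<Sum>i\<in>{..<d}-{j,k}. (x i)^2)"
    by (rule sum.cong) (auto simp: rot_def)
  moreover have "(rot j k x j)^2 + (rot j k x k)^2 = (x j)^2 + (x k)^2"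
    using assms by (simp add: rot_def power_divide power2_eq_square field_simps)
  ultimately show ?thesis by simp
qed

lemma Nz_rot: assumes "j < d" "k < d" "j \<noteq> k" shows "Nz d (rot j k x) = rot j k (Nz d x)"
  using sq_rot[OF assms, of x] assms unfolding Nz_def
  by (auto simp: fun_eq_iff rot_def add_divide_distrib diff_divide_distrib mult.commute)

lemma J_rot:
  assumes "j < d" "k < d" "j \<noteq> k" and g: "(g :: _ \<Rightarrow> real) \<in> borel_measurable (PP d)"
  shows "integral\<^sup>L (mu d) (\<lambda>x. g (Nz d x)) = integral\<^sup>L (mu d) (\<lambda>x. g (rot j k (Nz d x)))"
proof -
  have "integral\<^sup>L (mu d) (\<lambda>x. g (Nz d x)) = integral\<^sup>L (mu d) (\<lambda>x. g (Nz d (rot j k x)))"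
    by (rule mu_inv[where f="\<lambda>x. g (Nz d x)", OF rot_meas[OF assms(1-3)] rot_pres[OF assms(1-3)] sq_rot[OF assms(1-3)]])
      (use measurable_comp[OF Nz_meas g] in \<open>simp add: comp_def\<close>)
  then show ?thesis by (simp add: Nz_rot[OF assms(1-3)])
qed

lemma J_lin:
  assumes "\<And>c ys. (c, ys) \<in> set ps \<Longrightarrow> set ys \<subseteq> {..<d}"
  shows "integral\<^sup>L (mu d) (\<lambda>x. \<Sum>(c,ys)\<leftarrow>ps. c * prod_list (map (Nz d x) ys)) = (\<Sum>(c,ys)\<leftarrow>ps. c * J d ys)
     \<and> integrable (mu d) (\<lambda>x. \<Sum>(c,ys)\<leftarrow>ps. c * prod_list (map (Nz d x) ys))"
  using assms
proof (induction ps)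
  case (Cons p ps)
  obtain c ys where p: "p = (c, ys)" by force
  have i1: "integrable (mu d) (\<lambda>x. c * prod_list (map (Nz d x) ys))"
    using Cons.prems p by (auto intro!: J_int)
  have IH: "integral\<^sup>L (mu d) (\<lambda>x. \<Sum>(c,ys)\<leftarrow>ps. c * prod_list (map (Nz d x) ys)) = (\<Sum>(c,ys)\<leftarrow>ps. c * J d ys)"
    "integrable (mu d) (\<lambda>x. \<Sum>(c,ys)\<leftarrow>ps. c * prod_list (map (Nz d x) ys))"
    using Cons by auto
  show ?case using i1 IH p
    by (simp add: J_def integral_add)
qed simp

lemma R2: assumes "j < d" "k < d" "j \<noteq> k"
  shows "J d [j,j] = (J d [j,j] + 2 * J d [j,k] + J d [k,k]) / 2"
proof -
  have "J d [j,j] = integral\<^sup>L (mu d) (\<lambda>x. (\<lambda>v. v j * v j) (rot j k (Nz d x)))"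
    unfolding J_def using J_rot[OF assms, of "\<lambda>v. v j * v j"] assms by (simp add: PP_def)
  also have "\<dots> = integral\<^sup>L (mu d) (\<lambda>x. \<Sum>(c,ys)\<leftarrow>[(1/2,[j,j]),(1,[j,k]),(1/2,[k,k])]. c * prod_list (map (Nz d x) ys))"
    using assms by (intro Bochner_Integration.integral_cong refl) (simp add: rot_def field_simps power2_eq_square)
  also have "\<dots> = (J d [j,j] + 2 * J d [j,k] + J d [k,k]) / 2"
  proof -
    have "integral\<^sup>L (mu d) (\<lambda>x. \<Sum>(c,ys)\<leftarrow>[(1/2,[j,j]),(1,[j,k]),(1/2,[k,k])]. c * prod_list (map (Nz d x) ys))
      = (\<Sum>(c,ys)\<leftarrow>[(1/2,[j,j]),(1,[j,k]),(1/2,[k,k])]. c * J d ys)"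
      by (rule conjunct1[OF J_lin]) (use assms in auto)
    then show ?thesis by simp
  qed
  finally show ?thesis .
qed


lemma s4: "sqrt (2::real) ^ 4 = 4"
proof -
  have "sqrt (2::real) ^ 4 = (sqrt 2 ^ 2) ^ 2" by (simp only: power_mult[symmetric]) simp
  then show ?thesis by simp
qed

lemma e4: "(x/sqrt 2) * ((x/sqrt 2) * ((x/sqrt 2) * (x/sqrt 2))) = (x::real)^4/4"
proof -
  have "(x/sqrt 2) * ((x/sqrt 2) * ((x/sqrt 2) * (x/sqrt 2))) = (x/sqrt 2)^4" by (simp add: eval_nat_numeral)
  also have "\<dots> = x^4 / 4" by (simp add: power_divide s4)
  finally show ?thesis .
qed

lemma pow4:
  fixes a b :: real
  shows "((a+b)/sqrt 2) * (((a+b)/sqrt 2) * (((a+b)/sqrt 2) * ((a+b)/sqrt 2))) =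
     1/4 * (a*(a*(a*a))) + (a*(a*(a*b))) + 3/2 * (a*(a*(b*b))) + (a*(b*(b*b))) + 1/4 * (b*(b*(b*b)))"
    and "((a-b)/sqrt 2) * (((a-b)/sqrt 2) * (((a-b)/sqrt 2) * ((a-b)/sqrt 2))) =
     1/4 * (a*(a*(a*a))) - (a*(a*(a*b))) + 3/2 * (a*(a*(b*b))) - (a*(b*(b*b))) + 1/4 * (b*(b*(b*b)))"
  by (simp only: e4, simp add: eval_nat_numeral field_simps)+

lemma R4: assumes "j < d" "k < d" "j \<noteq> k"
  shows "J d [j,j,j,j] = J d [j,j,j,j]/4 + J d [j,j,j,k] + 3/2 * J d [j,j,k,k] + J d [j,k,k,k] + J d [k,k,k,k]/4"
    "J d [k,k,k,k] = J d [j,j,j,j]/4 - J d [j,j,j,k] + 3/2 * J d [j,j,k,k] - J d [j,k,k,k] + J d [k,k,k,k]/4"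
proof -
  have rj: "rot j k v j = (v j + v k)/sqrt 2" and rk: "rot j k v k = (v j - v k)/sqrt 2" for v
    using assms by (auto simp: rot_def)
  let ?ps = "[(1/4,[j,j,j,j]),(1,[j,j,j,k]),(3/2,[j,j,k,k]),(1,[j,k,k,k]),(1/4,[k,k,k,k])]"
  let ?qs = "[(1/4,[j,j,j,j]),(-1,[j,j,j,k]),(3/2,[j,j,k,k]),(-1,[j,k,k,k]),(1/4,[k,k,k,k])]"
  have Lp: "integral\<^sup>L (mu d) (\<lambda>x. \<Sum>(c,ys)\<leftarrow>?ps. c * prod_list (map (Nz d x) ys)) = (\<Sum>(c,ys)\<leftarrow>?ps. c * J d ys)"
    by (rule conjunct1[OF J_lin]) (use assms in auto)
  have Lq: "integral\<^sup>L (mu d) (\<lambda>x. \<Sum>(c,ys)\<leftarrow>?qs. c * prod_list (map (Nz d x) ys)) = (\<Sum>(c,ys)\<leftarrow>?qs. c * J d ys)"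
    by (rule conjunct1[OF J_lin]) (use assms in auto)
  have "J d [j,j,j,j] = integral\<^sup>L (mu d) (\<lambda>x. (\<lambda>v. v j * (v j * (v j * v j))) (rot j k (Nz d x)))"
    unfolding J_def using J_rot[OF assms, of "\<lambda>v. v j * (v j * (v j * v j))"] assms by (simp add: PP_def)
  also have "\<dots> = integral\<^sup>L (mu d) (\<lambda>x. \<Sum>(c,ys)\<leftarrow>?ps. c * prod_list (map (Nz d x) ys))"
    using assms by (intro Bochner_Integration.integral_cong refl) (simp only: rj rk pow4, simp)
  finally show "J d [j,j,j,j] = J d [j,j,j,j]/4 + J d [j,j,j,k] + 3/2 * J d [j,j,k,k] + J d [j,k,k,k] + J d [k,k,k,k]/4"
    using Lp by simp
  have "J d [k,k,k,k] = integral\<^sup>L (mu d) (\<lambda>x. (\<lambda>v. v k * (v k * (v k * v k))) (rot j k (Nz d x)))"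
    unfolding J_def using J_rot[OF assms, of "\<lambda>v. v k * (v k * (v k * v k))"] assms by (simp add: PP_def)
  also have "\<dots> = integral\<^sup>L (mu d) (\<lambda>x. \<Sum>(c,ys)\<leftarrow>?qs. c * prod_list (map (Nz d x) ys))"
    using assms by (intro Bochner_Integration.integral_cong refl) (simp only: rj rk pow4, simp)
  finally show "J d [k,k,k,k] = J d [j,j,j,j]/4 - J d [j,j,j,k] + 3/2 * J d [j,j,k,k] - J d [j,k,k,k] + J d [k,k,k,k]/4"
    using Lq by simp
qed




lemma J_nil: "J d [] = 1"
proof -
  interpret prob_space "mu d" by (rule mu_prob)
  show ?thesis by (simp add: J_def prob_space)
qed

lemma L_pos: assumes D: "projective_design 2 d L u" shows "L > 0"
proof (rule ccontr)
  assume "\<not> L > 0"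
  then have "L = 0" by simp
  then show False using design_J[OF D, of "[]" 0] J_nil by simp
qed

lemma sphere_sum: assumes D: "projective_design 2 d L u"
  shows "(\<Sum>j<d. (1 / real L) * (\<Sum>l<L. prod_list (map (u l) [j,j]))) = 1"
    "(\<Sum>j<d. \<Sum>k<d. (1 / real L) * (\<Sum>l<L. prod_list (map (u l) [j,j,k,k]))) = 1"
proof -
  have sp: "l < L \<Longrightarrow> (\<Sum>j<d. u l j * u l j) = 1" for l
    using D unfolding projective_design_def on_sphere_def sqnorm_def by (simp add: power2_eq_square)
  have L: "L > 0" by (rule L_pos[OF D])
  have "(\<Sum>j<d. (1 / real L) * (\<Sum>l<L. prod_list (map (u l) [j,j]))) = (1 / real L) * (\<Sum>l<L. \<Sum>j<d. u l j * u l j)"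
  proof -
    have "(\<Sum>j<d. (1 / real L) * (\<Sum>l<L. prod_list (map (u l) [j,j]))) = (1 / real L) * (\<Sum>j<d. \<Sum>l<L. u l j * u l j)"
      by (simp add: sum_distrib_left)
    also have "(\<Sum>j<d. \<Sum>l<L. u l j * u l j) = (\<Sum>l<L. \<Sum>j<d. u l j * u l j)" by (rule sum.swap)
    finally show ?thesis .
  qed
  also have "\<dots> = 1" using L by (simp add: sp)
  finally show "(\<Sum>j<d. (1 / real L) * (\<Sum>l<L. prod_list (map (u l) [j,j]))) = 1" .
  have "(\<Sum>j<d. \<Sum>k<d. (1 / real L) * (\<Sum>l<L. prod_list (map (u l) [j,j,k,k])))
      = (1 / real L) * (\<Sum>l<L. (\<Sum>j<d. u l j * u l j) * (\<Sum>k<d. u l k * u l k))"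
  proof -
    have "(\<Sum>j<d. \<Sum>k<d. (1 / real L) * (\<Sum>l<L. prod_list (map (u l) [j,j,k,k])))
      = (1 / real L) * (\<Sum>j<d. \<Sum>k<d. \<Sum>l<L. (u l j * u l j) * (u l k * u l k))"
      by (simp add: sum_distrib_left mult.assoc)
    also have "(\<Sum>j<d. \<Sum>k<d. \<Sum>l<L. (u l j * u l j) * (u l k * u l k)) = (\<Sum>j<d. \<Sum>l<L. \<Sum>k<d. (u l j * u l j) * (u l k * u l k))"
      by (rule sum.cong[OF refl], rule sum.swap)
    also have "\<dots> = (\<Sum>l<L. \<Sum>j<d. \<Sum>k<d. (u l j * u l j) * (u l k * u l k))" by (rule sum.swap)
    also have "\<dots> = (\<Sum>l<L. (\<Sum>j<d. u l j * u l j) * (\<Sum>k<d. u l k * u l k))"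
      by (simp add: sum_product)
    finally show ?thesis .
  qed
  also have "\<dots> = 1" using L by (simp add: sp)
  finally show "(\<Sum>j<d. \<Sum>k<d. (1 / real L) * (\<Sum>l<L. prod_list (map (u l) [j,j,k,k]))) = 1" .
qed

lemma mom2:
  assumes D: "projective_design 2 d L u" and j: "j < d" and k: "k < d"
  shows "J d [j,k] = (if j = k then 1 / real d else 0)"
proof -
  have off: "J d [a,b] = 0" if "a < d" "b < d" "a \<noteq> b" for a b
    by (rule J_flip[of a]) (use that in auto)
  have eq: "J d [a,a] = J d [0,0]" if "a < d" for a
  proof (cases "a = 0")
    case False
    then show ?thesis using R2[of a d 0] off[of a 0] that by simp
  qed simp
  have "(\<Sum>j<d. J d [j,j]) = 1"
  proof -
    have "(\<Sum>j<d. J d [j,j]) = (\<Sum>j<d. (1 / real L) * (\<Sum>l<L. prod_list (map (u l) [j,j])))"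
      by (rule sum.cong[OF refl], rule design_J[OF D, symmetric, of _ 1]) auto
    then show ?thesis using sphere_sum(1)[OF D] by simp
  qed
  moreover have "(\<Sum>j<d. J d [j,j]) = (\<Sum>j<d. J d [0,0])" by (rule sum.cong) (auto intro: eq)
  ultimately have "real d * J d [0,0] = 1" by simp
  moreover have "real d > 0" using j by simp
  ultimately show ?thesis using eq[OF j] off[OF j k]
    by (auto simp: field_simps)
qed


lemma mom4_diag:
  assumes D: "projective_design 2 d L u" and d: "d > 0"
  shows "\<And>a. a < d \<Longrightarrow> J d [a,a,a,a] = 3 / (real d * (real d + 2))"
    and "\<And>a b. a < d \<Longrightarrow> b < d \<Longrightarrow> a \<noteq> b \<Longrightarrow> J d [a,a,b,b] = 1 / (real d * (real d + 2))"
proof -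
  have o1: "J d [a,a,a,b] = 0" if "a < d" "b < d" "a \<noteq> b" for a b
    by (rule J_flip[of b]) (use that in auto)
  have o2: "J d [a,b,b,b] = 0" if "a < d" "b < d" "a \<noteq> b" for a b
    by (rule J_flip[of a]) (use that in auto)
  have ab: "J d [a,a,a,a] = J d [b,b,b,b] \<and> J d [a,a,b,b] = J d [a,a,a,a] / 3" if "a < d" "b < d" "a \<noteq> b" for a b
    using R4[OF that] o1[OF that] o2[OF that] by linarith
  define \<alpha> where "\<alpha> = J d [0,0,0,0]"
  have eqa: "J d [a,a,a,a] = \<alpha>" if "a < d" for a
    using ab[of a 0] that d unfolding \<alpha>_def by (cases "a = 0") auto
  have eqb: "J d [a,a,b,b] = \<alpha> / 3" if "a < d" "b < d" "a \<noteq> b" for a b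
    using ab[OF that] eqa that by simp
  have "(\<Sum>j<d. \<Sum>k<d. J d [j,j,k,k]) = 1"
  proof -
    have "(\<Sum>j<d. \<Sum>k<d. J d [j,j,k,k]) = (\<Sum>j<d. \<Sum>k<d. (1 / real L) * (\<Sum>l<L. prod_list (map (u l) [j,j,k,k])))"
      by (intro sum.cong refl, rule design_J[OF D, symmetric, of _ 2]) auto
    then show ?thesis using sphere_sum(2)[OF D] by simp
  qed
  moreover have "(\<Sum>j<d. \<Sum>k<d. J d [j,j,k,k]) = (\<Sum>j<d. \<Sum>k<d. \<alpha>/3 + (if k = j then 2*\<alpha>/3 else 0))"
    by (intro sum.cong refl) (auto simp: eqa eqb)
  moreover have "\<dots> = real d * (real d * \<alpha> / 3 + 2 * \<alpha> / 3)"
    by (simp add: sum.distrib)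
  ultimately have "real d * (real d * \<alpha> / 3 + 2 * \<alpha> / 3) = 1" by simp
  then have "\<alpha> * (real d * (real d + 2)) = 3" by (simp add: algebra_simps)
  moreover have "real d * (real d + 2) > 0" using d by simp
  ultimately have a3: "\<alpha> = 3 / (real d * (real d + 2))"
    by (metis less_irrefl nonzero_eq_divide_eq)
  show "\<And>a. a < d \<Longrightarrow> J d [a,a,a,a] = 3 / (real d * (real d + 2))" using eqa a3 by simp
  show "\<And>a b. a < d \<Longrightarrow> b < d \<Longrightarrow> a \<noteq> b \<Longrightarrow> J d [a,a,b,b] = 1 / (real d * (real d + 2))"
    using eqb a3 by simp
qed

lemma odd_pat: fixes j k p q :: nat
  assumes "\<not> ((j = k \<and> p = q) \<or> (j = p \<and> k = q) \<or> (j = q \<and> k = p))"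
  shows "odd (count_list [j,k,p,q] j) \<or> odd (count_list [j,k,p,q] k) \<or> odd (count_list [j,k,p,q] p)"
proof (cases "k = j")
  case True
  then have "p \<noteq> q" using assms by auto
  then show ?thesis using True by (cases "p = j") auto
next
  case F: False
  show ?thesis
  proof (cases "p = j")
    case True
    then have "k \<noteq> q" using assms by auto
    then show ?thesis using True F by (cases "q = j") auto
  next
    case F2: False
    show ?thesis
    proof (cases "q = j")
      case True
      then have "k \<noteq> p" using assms by auto
      then show ?thesis using True F F2 by auto
    next
      case False
      then show ?thesis using F F2 by auto
    qed
  qed
qed

lemma mom4:
  assumes D: "projective_design 2 d L u" and "j < d" "k < d" "p < d" "q < d"
  shows "J d [j,k,p,q] = ((if j = k \<and> p = q then 1 else 0) + (if j = p \<and> k = q then 1 else 0)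
      + (if j = q \<and> k = p then 1 else 0)) / (real d * (real d + 2))"
proof -
  have d: "d > 0" using assms by simp
  note m = mom4_diag[OF D d]
  have c1: "J d [j,k,j,k] = J d [j,j,k,k]" "J d [j,k,k,j] = J d [j,j,k,k]"
    unfolding J_def by (simp_all only: list.map prod_list.Cons ac_simps)
  show ?thesis
  proof (cases "j = k \<and> k = p \<and> p = q")
    case True
    then have e: "k = j" "p = j" "q = j" by auto
    show ?thesis unfolding e using m(1)[OF assms(2)] by simp
  next
    case F1: False
    show ?thesis
    proof (cases "(j = k \<and> p = q) \<or> (j = p \<and> k = q) \<or> (j = q \<and> k = p)")
      case True
      then consider "k = j" "q = p" "j \<noteq> p" | "p = j" "q = k" "j \<noteq> k" | "q = j" "p = k" "j \<noteq> k"
        using F1 by blast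
      then show ?thesis
      proof cases
        case 1
        show ?thesis unfolding 1(1,2) using m(2)[OF assms(2) assms(4) 1(3)] 1(3) by simp
      next
        case 2
        show ?thesis unfolding 2(1,2) using m(2)[OF assms(2) assms(3) 2(3)] c1 2(3) by simp
      next
        case 3
        show ?thesis unfolding 3(1,2) using m(2)[OF assms(2) assms(3) 3(3)] c1 3(3) by simp
      qed
    next
      case False
      have "odd (count_list [j,k,p,q] j) \<or> odd (count_list [j,k,p,q] k) \<or> odd (count_list [j,k,p,q] p)"
        using odd_pat[OF False] .
      moreover have S: "set [j,k,p,q] \<subseteq> {..<d}" using assms(2-5) by simp
      ultimately have "J d [j,k,p,q] = 0"
      proof (elim disjE)
        assume "odd (count_list [j,k,p,q] j)" then show ?thesis by (rule J_flip[OF assms(2) S])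
      next
        assume "odd (count_list [j,k,p,q] k)" then show ?thesis by (rule J_flip[OF assms(3) S])
      next
        assume "odd (count_list [j,k,p,q] p)" then show ?thesis by (rule J_flip[OF assms(4) S])
      qed
      moreover have n1: "\<not> (j = k \<and> p = q)" "\<not> (j = p \<and> k = q)" "\<not> (j = q \<and> k = p)"
        using False by blast+
      ultimately show ?thesis by (simp only: if_not_P[OF n1(1)] if_not_P[OF n1(2)] if_not_P[OF n1(3)]) simp
    qed
  qed
qed


lemma dq: "r < n \<Longrightarrow> (\<Sum>q<(n::nat). (F q::real) * (if C \<and> r = q then 1 else 0)) = (if C then F r else 0)"
  by (cases C) (auto simp: if_distrib[of "\<lambda>t. F _ * t"] cong: if_cong)

lemma dk: "j < n \<Longrightarrow> (\<Sum>k<(n::nat). \<Sum>p<(m::nat). if j = k then (G k p::real) else 0) = (\<Sum>p<m. G j p)"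
proof -
  have "(\<Sum>k<n. \<Sum>p<m. if j = k then (G k p::real) else 0) = (\<Sum>k<n. if j = k then (\<Sum>p<m. G k p) else 0)"
    by (rule sum.cong) auto
  also assume "j < n"
  then have "(\<Sum>k<n. if j = k then (\<Sum>p<m. G k p) else 0) = (\<Sum>p<m. G j p)" by simp
  finally show ?thesis .
qed

lemma S1: "(\<Sum>j<n. \<Sum>k<n. \<Sum>p<n. \<Sum>q<(n::nat). a j * a k * x p * x q * (if j = k \<and> p = q then 1 else 0)) = (\<Sum>j<n. a j * a j) * (\<Sum>p<n. x p * (x p::real))"
proof -
  have "(\<Sum>j<n. \<Sum>k<n. \<Sum>p<n. \<Sum>q<n. a j * a k * x p * x q * (if j = k \<and> p = q then 1 else 0)) = (\<Sum>j<n. \<Sum>k<n. \<Sum>p<n. if j = k then a j * a k * x p * x p else 0)"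
    by (intro sum.cong refl) (simp add: dq)
  also have "\<dots> = (\<Sum>j<n. \<Sum>p<n. a j * a j * x p * x p)"
    by (rule sum.cong[OF refl], rule dk) simp
  finally show ?thesis by (simp add: sum_product mult.assoc)
qed

lemma S2: "(\<Sum>j<n. \<Sum>k<n. \<Sum>p<n. \<Sum>q<(n::nat). a j * a k * x p * x q * (if j = p \<and> k = q then 1 else 0)) = (\<Sum>j<n. a j * (x j::real))^2"
proof -
  have "(\<Sum>j<n. \<Sum>k<n. \<Sum>p<n. \<Sum>q<n. a j * a k * x p * x q * (if j = p \<and> k = q then 1 else 0)) = (\<Sum>j<n. \<Sum>k<n. \<Sum>p<n. if j = p then a j * a k * x p * x k else 0)"
    by (intro sum.cong refl) (simp add: dq)
  also have "\<dots> = (\<Sum>j<n. \<Sum>k<n. a j * a k * x j * x k)"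
    by (intro sum.cong refl) simp
  finally show ?thesis by (simp add: power2_eq_square sum_product algebra_simps)
qed

lemma S3: "(\<Sum>j<n. \<Sum>k<n. \<Sum>p<n. \<Sum>q<(n::nat). a j * a k * x p * x q * (if j = q \<and> k = p then 1 else 0)) = (\<Sum>j<n. a j * (x j::real))^2"
proof -
  have "(\<Sum>j<n. \<Sum>k<n. \<Sum>p<n. \<Sum>q<n. a j * a k * x p * x q * (if j = q \<and> k = p then 1 else 0)) = (\<Sum>j<n. \<Sum>k<n. \<Sum>p<n. \<Sum>q<n. a j * a k * x p * x q * (if k = p \<and> j = q then 1 else 0))"
    by (intro sum.cong refl) (simp add: conj_commute)
  also have "\<dots> = (\<Sum>j<n. \<Sum>k<n. \<Sum>p<n. if k = p then a j * a k * x p * x j else 0)"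
    by (intro sum.cong refl) (simp add: dq)
  also have "\<dots> = (\<Sum>j<n. \<Sum>k<n. a j * a k * x k * x j)"
    by (intro sum.cong refl) simp
  finally show ?thesis by (simp add: power2_eq_square sum_product algebra_simps)
qed

lemma swap3: "(\<Sum>l\<in>A. \<Sum>j\<in>B. \<Sum>k\<in>C. f l j k) = (\<Sum>j\<in>B. \<Sum>k\<in>C. \<Sum>l\<in>A. (f l j k :: real))"
proof -
  have "(\<Sum>l\<in>A. \<Sum>j\<in>B. \<Sum>k\<in>C. f l j k) = (\<Sum>j\<in>B. \<Sum>l\<in>A. \<Sum>k\<in>C. f l j k)" by (rule sum.swap)
  also have "\<dots> = (\<Sum>j\<in>B. \<Sum>k\<in>C. \<Sum>l\<in>A. f l j k)" by (rule sum.cong[OF refl], rule sum.swap)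
  finally show ?thesis .
qed

lemma swap5: "(\<Sum>l\<in>A. \<Sum>j\<in>B. \<Sum>k\<in>C. \<Sum>p\<in>D. \<Sum>q\<in>E. f l j k p q) = (\<Sum>j\<in>B. \<Sum>k\<in>C. \<Sum>p\<in>D. \<Sum>q\<in>E. \<Sum>l\<in>A. (f l j k p q :: real))"
proof -
  have "(\<Sum>l\<in>A. \<Sum>j\<in>B. \<Sum>k\<in>C. \<Sum>p\<in>D. \<Sum>q\<in>E. f l j k p q) = (\<Sum>j\<in>B. \<Sum>k\<in>C. \<Sum>l\<in>A. \<Sum>p\<in>D. \<Sum>q\<in>E. f l j k p q)"
    by (rule swap3)
  also have "\<dots> = (\<Sum>j\<in>B. \<Sum>k\<in>C. \<Sum>p\<in>D. \<Sum>q\<in>E. \<Sum>l\<in>A. f l j k p q)"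
    by (intro sum.cong refl, rule swap3)
  finally show ?thesis .
qed

lemma avg2: "(1 / real L) * (\<Sum>l<L. (\<Sum>j<n. a j * u l j) * (\<Sum>k<n. b k * u l k)) =
   (\<Sum>j<n. \<Sum>k<n. a j * b k * ((1 / real L) * (\<Sum>l<L. u l j * u l k)))"
proof -
  have "(\<Sum>l<L. (\<Sum>j<n. a j * u l j) * (\<Sum>k<n. b k * u l k)) = (\<Sum>l<L. \<Sum>j<n. \<Sum>k<n. a j * b k * (u l j * u l k))"
    by (simp add: sum_product algebra_simps)
  also have "\<dots> = (\<Sum>j<n. \<Sum>k<n. \<Sum>l<L. a j * b k * (u l j * u l k))" by (rule swap3)
  finally show ?thesis by (simp add: sum_distrib_left algebra_simps)
qed

lemma avg4: "(1 / real L) * (\<Sum>l<L. (\<Sum>j<n. a j * u l j) * (\<Sum>k<n. b k * u l k) * (\<Sum>p<n. c p * u l p) * (\<Sum>q<n. e q * u l q)) =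
   (\<Sum>j<n. \<Sum>k<n. \<Sum>p<n. \<Sum>q<n. a j * b k * c p * e q * ((1 / real L) * (\<Sum>l<L. u l j * (u l k * (u l p * u l q)))))"
proof -
  have "(\<Sum>l<L. (\<Sum>j<n. a j * u l j) * (\<Sum>k<n. b k * u l k) * (\<Sum>p<n. c p * u l p) * (\<Sum>q<n. e q * u l q))
     = (\<Sum>l<L. \<Sum>j<n. \<Sum>k<n. \<Sum>p<n. \<Sum>q<n. a j * b k * c p * e q * (u l j * (u l k * (u l p * u l q))))"
  proof (rule sum.cong[OF refl])
    fix l
    have "(\<Sum>j<n. \<Sum>k<n. \<Sum>p<n. \<Sum>q<n. (a j * u l j) * (b k * u l k) * (c p * u l p) * (e q * u l q))
       = (\<Sum>j<n. a j * u l j) * (\<Sum>k<n. b k * u l k) * (\<Sum>p<n. c p * u l p) * (\<Sum>q<n. e q * u l q)"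
      by (simp only: sum_distrib_left[symmetric] sum_distrib_right[symmetric])
    moreover have "(\<Sum>j<n. \<Sum>k<n. \<Sum>p<n. \<Sum>q<n. (a j * u l j) * (b k * u l k) * (c p * u l p) * (e q * u l q))
       = (\<Sum>j<n. \<Sum>k<n. \<Sum>p<n. \<Sum>q<n. a j * b k * c p * e q * (u l j * (u l k * (u l p * u l q))))"
      by (intro sum.cong refl) (simp add: algebra_simps)
    ultimately show "(\<Sum>j<n. a j * u l j) * (\<Sum>k<n. b k * u l k) * (\<Sum>p<n. c p * u l p) * (\<Sum>q<n. e q * u l q)
       = (\<Sum>j<n. \<Sum>k<n. \<Sum>p<n. \<Sum>q<n. a j * b k * c p * e q * (u l j * (u l k * (u l p * u l q))))" by simp
  qed
  also have "\<dots> = (\<Sum>j<n. \<Sum>k<n. \<Sum>p<n. \<Sum>q<n. \<Sum>l<L. a j * b k * c p * e q * (u l j * (u l k * (u l p * u l q))))"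
    by (rule swap5)
  finally show ?thesis by (simp add: sum_distrib_left algebra_simps)
qed


lemma dq1: "j < n \<Longrightarrow> (\<Sum>k<(n::nat). (F k::real) * (if j = k then c else 0)) = F j * c"
proof -
  have "(\<Sum>k<n. F k * (if j = k then c else 0)) = (\<Sum>k<n. if j = k then F k * c else 0)"
    by (rule sum.cong) auto
  also assume "j < n"
  then have "(\<Sum>k<n. if j = k then F k * c else 0) = F j * c" by simp
  finally show ?thesis .
qed

lemma norm_bound: "i < m \<Longrightarrow> (\<Sum>j<n. (A i j)^2) \<le> (norm_2_inf m n A)^2"
proof -
  assume i: "i < m"
  have fin: "finite {sqrt (\<Sum>j<n. (A i j)^2) | i. i < m}" by simp
  have "sqrt (\<Sum>j<n. (A i j)^2) \<le> norm_2_inf m n A"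
    unfolding norm_2_inf_def by (rule Max_ge[OF fin]) (use i in blast)
  moreover have nn: "0 \<le> (\<Sum>j<n. (A i j)^2)" by (auto intro!: sum_nonneg)
  then have "0 \<le> sqrt (\<Sum>j<n. (A i j)^2)" by simp
  ultimately have "(sqrt (\<Sum>j<n. (A i j)^2))^2 \<le> (norm_2_inf m n A)^2"
    by (rule power_mono)
  moreover note nn
  ultimately show ?thesis by simp
qed

theorem lemma2p3:
  fixes m n d L :: nat
    and A :: "nat \<Rightarrow> nat \<Rightarrow> real"
    and u :: "nat \<Rightarrow> nat \<Rightarrow> real"
    and x :: "nat \<Rightarrow> real"
    and i :: nat
  assumes "d \<ge> n"
    and "projective_design 2 d L u"
    and "sqnorm n x = 1"
    and "i < m"
  defines "Y \<equiv> (\<lambda>l. let z = (\<lambda>j. sqrt (real d) * u l j) in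
              (\<Sum>j<n. A i j * z j * (\<Sum>k<n. z k * x k)))"
  shows "(1 / real L) * (\<Sum>l<L. Y l) = (\<Sum>j<n. A i j * x j)
     \<and> (1 / real L) * (\<Sum>l<L. (Y l - (1 / real L) * (\<Sum>l'<L. Y l'))^2)
         \<le> 2 * (norm_2_inf m n A)^2"
proof (cases "n = 0")
  case True
  then have "Y l = 0" for l by (simp add: Y_def)
  then show ?thesis using True by simp
next
  case False
  note D = assms(2)
  define a where "a j = A i j" for j
  have d0: "d > 0" using False assms(1) by simp
  have L0: "L > 0" by (rule L_pos[OF D])
  have Yf: "Y l = real d * ((\<Sum>j<n. a j * u l j) * (\<Sum>k<n. x k * u l k))" for l
  proof -
    have h: "(\<Sum>k<n. sqrt (real d) * u l k * x k) = sqrt (real d) * (\<Sum>k<n. x k * u l k)"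
      by (simp add: sum_distrib_left mult_ac)
    have "Y l = (\<Sum>j<n. real d * (a j * u l j) * (\<Sum>k<n. x k * u l k))"
      unfolding Y_def Let_def h a_def by (rule sum.cong) (simp_all add: mult_ac)
    also have "\<dots> = real d * (\<Sum>j<n. a j * u l j) * (\<Sum>k<n. x k * u l k)"
      by (simp only: sum_distrib_right[symmetric] sum_distrib_left[symmetric])
    also have "\<dots> = real d * ((\<Sum>j<n. a j * u l j) * (\<Sum>k<n. x k * u l k))"
      by (simp only: mult.assoc)
    finally show ?thesis .
  qed
  have E2: "(1 / real L) * (\<Sum>l<L. u l j * u l k) = (if j = k then 1 / real d else 0)"
    if "j < n" "k < n" for j k
    using design_J[OF D, of "[j,k]" 1] mom2[OF D, of j k] that assms(1) by simp
  have E4: "(1 / real L) * (\<Sum>l<L. u l j * (u l k * (u l p * u l q))) =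
      ((if j = k \<and> p = q then 1 else 0) + (if j = p \<and> k = q then 1 else 0)
      + (if j = q \<and> k = p then 1 else 0)) / (real d * (real d + 2))"
    if "j < n" "k < n" "p < n" "q < n" for j k p q
    using design_J[OF D, of "[j,k,p,q]" 2] mom4[OF D, of j k p q] that assms(1) by simp
  define c where "c = (\<Sum>j<n. a j * x j)"
  define A2 where "A2 = (\<Sum>j<n. a j * a j)"
  have X2: "(\<Sum>j<n. x j * x j) = 1" using assms(3) unfolding sqnorm_def by (simp add: power2_eq_square)
  have mean: "(1 / real L) * (\<Sum>l<L. Y l) = c"
  proof -
    have "(1 / real L) * (\<Sum>l<L. Y l) = real d * ((1 / real L) * (\<Sum>l<L. (\<Sum>j<n. a j * u l j) * (\<Sum>k<n. x k * u l k)))"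
      by (simp add: Yf sum_distrib_left mult_ac)
    also have "\<dots> = real d * (\<Sum>j<n. \<Sum>k<n. a j * x k * ((1 / real L) * (\<Sum>l<L. u l j * u l k)))"
      by (simp only: avg2)
    also have "\<dots> = real d * (\<Sum>j<n. \<Sum>k<n. a j * x k * (if j = k then 1 / real d else 0))"
      by (intro arg_cong[where f="\<lambda>t. real d * t"] sum.cong refl) (simp only: E2 lessThan_iff)
    also have "\<dots> = real d * (\<Sum>j<n. a j * x j * (1 / real d))"
      by (intro arg_cong[where f="\<lambda>t. real d * t"] sum.cong refl) (simp add: dq1)
    also have "\<dots> = c" using d0 by (simp add: c_def sum_distrib_left)
    finally show ?thesis .
  qed
  have second: "(1 / real L) * (\<Sum>l<L. (Y l)^2) = real d * (A2 + 2 * c^2) / (real d + 2)"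
  proof -
    define X where "X l = (\<Sum>j<n. a j * u l j) * (\<Sum>k<n. a k * u l k) * (\<Sum>p<n. x p * u l p) * (\<Sum>q<n. x q * u l q)" for l
    have pw: "(Y l)^2 = (real d)^2 * X l" for l
      unfolding Yf X_def by (simp add: power2_eq_square mult_ac)
    have "(1 / real L) * (\<Sum>l<L. (Y l)^2) = (1 / real L) * (\<Sum>l<L. (real d)^2 * X l)"
      by (simp only: pw)
    also have "\<dots> = (real d)^2 * ((1 / real L) * (\<Sum>l<L. X l))"
      by (simp only: sum_distrib_left[symmetric]) (simp only: mult_ac)
    finally have "(1 / real L) * (\<Sum>l<L. (Y l)^2) = (real d)^2 * ((1 / real L) * (\<Sum>l<L. (\<Sum>j<n. a j * u l j) * (\<Sum>k<n. a k * u l k) * (\<Sum>p<n. x p * u l p) * (\<Sum>q<n. x q * u l q)))"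
      unfolding X_def .
    also have "\<dots> = (real d)^2 * (\<Sum>j<n. \<Sum>k<n. \<Sum>p<n. \<Sum>q<n. a j * a k * x p * x q * ((1 / real L) * (\<Sum>l<L. u l j * (u l k * (u l p * u l q)))))"
      by (simp only: avg4)
    also have "\<dots> = (real d)^2 * (\<Sum>j<n. \<Sum>k<n. \<Sum>p<n. \<Sum>q<n. (a j * a k * x p * x q * (if j = k \<and> p = q then 1 else 0)
        + a j * a k * x p * x q * (if j = p \<and> k = q then 1 else 0) + a j * a k * x p * x q * (if j = q \<and> k = p then 1 else 0)) / (real d * (real d + 2)))"
      by (intro arg_cong[where f="\<lambda>t. (real d)^2 * t"] sum.cong refl) (simp only: E4 lessThan_iff times_divide_eq_right distrib_left)
    also have "\<dots> = (real d)^2 * ((A2 * 1 + c^2 + c^2) / (real d * (real d + 2)))"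
      by (simp only: sum_divide_distrib[symmetric] sum.distrib S1 S2 S3 X2 A2_def c_def)
    also have "\<dots> = real d * (A2 + 2 * c^2) / (real d + 2)"
    proof -
      have p1: "real d \<noteq> 0" using d0 by simp
      have p2: "real d + 2 \<noteq> 0" by (metis add_nonneg_pos of_nat_0_le_iff zero_less_numeral less_irrefl)
      have "(real d)^2 * ((A2 * 1 + c^2 + c^2) / (real d * (real d + 2))) = (real d * real d) * (A2 + 2 * c^2) / (real d * (real d + 2))"
        by (simp add: power2_eq_square)
      also have "\<dots> = real d * (A2 + 2 * c^2) / (real d + 2)"
        using p1 by (metis mult.assoc mult_divide_mult_cancel_left)
      finally show ?thesis .
    qed
    finally show ?thesis .
  qed
  have var: "(1 / real L) * (\<Sum>l<L. (Y l - c)^2) = (1 / real L) * (\<Sum>l<L. (Y l)^2) - c^2"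
  proof -
    have "(\<Sum>l<L. (Y l - c)^2) = (\<Sum>l<L. (Y l)^2) - 2 * c * (\<Sum>l<L. Y l) + real L * c^2"
      by (simp add: power2_diff sum.distrib sum_subtractf sum_distrib_left mult_ac)
    moreover have "(\<Sum>l<L. Y l) = real L * c" using mean L0 by (simp add: field_simps)
    ultimately show ?thesis using L0 by (simp add: field_simps power2_eq_square)
  qed
  have cs: "c^2 \<le> A2"
    using Cauchy_Schwarz_ineq_sum[of a x "{..<n}"] X2 unfolding c_def A2_def by (simp add: power2_eq_square)
  have A2n: "A2 \<le> (norm_2_inf m n A)^2"
    using norm_bound[OF assms(4), where n=n and A=A] unfolding A2_def a_def by (simp add: power2_eq_square)
  have c0: "0 \<le> c^2" by simp
  have bound: "real d * (A2 + 2 * c^2) / (real d + 2) - c^2 \<le> 2 * A2"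
  proof -
    have "real d * (A2 + 2 * c^2) - (real d + 2) * c^2 \<le> 2 * A2 * (real d + 2)"
    proof -
      have "real d * (A2 + 2 * c^2) - (real d + 2) * c^2 = real d * A2 + (real d - 2) * c^2" by (simp add: algebra_simps)
      also have "\<dots> \<le> real d * A2 + (real d + 4) * A2"
        using cs c0 by (smt (verit) mult_right_mono mult_left_mono of_nat_0_le_iff)
      finally show ?thesis by (simp add: algebra_simps)
    qed
    then show ?thesis using d0 by (simp add: field_simps)
  qed
  show ?thesis
    using mean var second bound A2n unfolding c_def a_def by simp
qed

end
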